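(* Let $g=(g_0,g_1,g_2,g_3)\in\mathbb{R}^4$ with $g_0<g_2$ and $g_1<g_3$ be a fixed ground-truth box, and let $L_i\le U_i$ ($i=0,1,2,3$) be real numbers with $L_2>0$ and $L_3>0$. Consider the problem of maximising $\mathrm{IoU}(\mathbf z,g)$ over $\mathbf z=(z_0,z_1,z_2,z_3)\in\mathbb{R}^4$ subject to the constraints $$L_0\le z_0+z_2\le U_0,\qquad L_1\le z_1+z_3\le U_1,\qquad L_2\le z_2-z_0\le U_2,\qquad L_3\le z_3-z_1\le U_3,$$ and let $F$ denote the set of $\mathbf z$ satisfying these constraints. Define the finite sets of planar points $$P^c_x=\Big\{\big(\tfrac{U_0-U_2}{2},\tfrac{U_0+U_2}{2}\big),\big(\tfrac{U_0-L_2}{2},\tfrac{U_0+L_2}{2}\big),\big(\tfrac{L_0-U_2}{2},\tfrac{L_0+U_2}{2}\big),\big(\tfrac{L_0-L_2}{2},\tfrac{L_0+L_2}{2}\big)\Big\},$$ $$P^c_y=\Big\{\big(\tfrac{U_1-U_3}{2},\tfrac{U_1+U_3}{2}\big),\big(\tfrac{U_1-L_3}{2},\tfrac{U_1+L_3}{2}\big),\big(\tfrac{L_1-U_3}{2},\tfrac{L_1+U_3}{2}\big),\big(\tfrac{L_1-L_3}{2},\tfrac{L_1+L_3}{2}\big)\Big\},$$ $$P^{\mathrm{int}}_x=\{(g_0,U_0-g_0),(g_0,L_0-g_0),(g_0,U_2+g_0),(g_0,L_2+g_0),(U_0-g_2,g_2),(L_0-g_2,g_2),(g_2-U_2,g_2),(g_2-L_2,g_2)\},$$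 $$P^{\mathrm{int}}_y=\{(g_1,U_1-g_1),(g_1,L_1-g_1),(g_1,U_3+g_1),(g_1,L_3+g_1),(U_1-g_3,g_3),(L_1-g_3,g_3),(g_3-U_3,g_3),(g_3-L_3,g_3)\},$$ $P^{gt}_x=\{(g_0,g_2)\}$, $P^{gt}_y=\{(g_1,g_3)\}$, and $P_x=P^c_x\cup P^{\mathrm{int}}_x\cup P^{gt}_x$, $P_y=P^c_y\cup P^{\mathrm{int}}_y\cup P^{gt}_y$. Let $P_{z_0}=\{\alpha:(\alpha,\beta)\in P_x\text{ for some }\beta\}$, $P_{z_2}=\{\beta:(\alpha,\beta)\in P_x\text{ for some }\alpha\}$, $P_{z_1}=\{\alpha:(\alpha,\beta)\in P_y\text{ for some }\beta\}$, $P_{z_3}=\{\beta:(\alpha,\beta)\in P_y\text{ for some }\alpha\}$, and $C_s=P_{z_0}\times P_{z_1}\times P_{z_2}\times P_{z_3}$ (a point $(z_0,z_1,z_2,z_3)$ lies in $C_s$ iff $z_i\in P_{z_i}$ for each $i$). Then the maximum of $\mathrm{IoU}(\mathbf z,g)$ over $F$ is attained at a point of $C_s$: if $\mathbf z^*\in F$ maximises $\mathrm{IoU}(\cdot,g)$ over $F$, then there exists $\mathbf z'\in C_s\cap F$ with $\mathrm{IoU}(\mathbf z',g)=\mathrm{IoU}(\mathbf z^*,g)$.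
   Context: Boxes are in corner format $b=(b_0,b_1,b_2,b_3)$ with top-left corner $(b_0,b_1)$ and bottom-right corner $(b_2,b_3)$. The area of a box is $\mathbf a(b)=(b_3-b_1)(b_2-b_0)$. The intersection of boxes $b,b'$ is $\mathbf i(b,b')=(\max(b_0,b'_0),\max(b_1,b'_1),\min(b_2,b'_2),\min(b_3,b'_3))$, and $\mathrm{IoU}(b,b')=\mathbf a(\mathbf i(b,b'))/\big(\mathbf a(b)+\mathbf a(b')-\mathbf a(\mathbf i(b,b'))\big)$. In the paper's setting the constraint bounds arise from interval bounds on predicted box centres ($z_0+z_2$, $z_1+z_3$ equal twice the centre coordinates) and on predicted widths and heights ($z_2-z_0$, $z_3-z_1$), which are positive. *)

theory Defs
  imports Main Complex_Main
begin

text \<open>Boxes in corner format (b0,b1,b2,b3): top-left (b0,b1), bottom-right (b2,b3).\<close>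
type_synonym box = "real \<times> real \<times> real \<times> real"

definition area :: "box \<Rightarrow> real" where
  "area b = (case b of (b0,b1,b2,b3) \<Rightarrow> (b3 - b1) * (b2 - b0))"

definition inter :: "box \<Rightarrow> box \<Rightarrow> box" where
  "inter b b' = (case b of (b0,b1,b2,b3) \<Rightarrow> case b' of (c0,c1,c2,c3) \<Rightarrow>
     (max b0 c0, max b1 c1, min b2 c2, min b3 c3))"

definition iou :: "box \<Rightarrow> box \<Rightarrow> real" where
  "iou b b' = area (inter b b') / (area b + area b' - area (inter b b'))"

definition feas :: "(nat \<Rightarrow> real) \<Rightarrow> (nat \<Rightarrow> real) \<Rightarrow> box set" where
  "feas L U = {(z0,z1,z2,z3).
      L 0 \<le> z0 + z2 \<and> z0 + z2 \<le> U 0 \<and>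
      L 1 \<le> z1 + z3 \<and> z1 + z3 \<le> U 1 \<and>
      L 2 \<le> z2 - z0 \<and> z2 - z0 \<le> U 2 \<and>
      L 3 \<le> z3 - z1 \<and> z3 - z1 \<le> U 3}"

text \<open>Corner points; a = index of centre bound, b = index of width bound.\<close>
definition Pc :: "(nat \<Rightarrow> real) \<Rightarrow> (nat \<Rightarrow> real) \<Rightarrow> nat \<Rightarrow> nat \<Rightarrow> (real \<times> real) set" where
  "Pc L U a b = {((U a - U b)/2, (U a + U b)/2), ((U a - L b)/2, (U a + L b)/2),
                 ((L a - U b)/2, (L a + U b)/2), ((L a - L b)/2, (L a + L b)/2)}"

definition Pint :: "(nat \<Rightarrow> real) \<Rightarrow> (nat \<Rightarrow> real) \<Rightarrow> nat \<Rightarrow> nat \<Rightarrow> real \<Rightarrow> real \<Rightarrow> (real \<times> real) set" where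
  "Pint L U a b ga gb = {(ga, U a - ga), (ga, L a - ga), (ga, U b + ga), (ga, L b + ga),
                        (U a - gb, gb), (L a - gb, gb), (gb - U b, gb), (gb - L b, gb)}"

definition Px :: "(nat \<Rightarrow> real) \<Rightarrow> (nat \<Rightarrow> real) \<Rightarrow> box \<Rightarrow> (real \<times> real) set" where
  "Px L U g = (case g of (g0,g1,g2,g3) \<Rightarrow> Pc L U 0 2 \<union> Pint L U 0 2 g0 g2 \<union> {(g0, g2)})"

definition Py :: "(nat \<Rightarrow> real) \<Rightarrow> (nat \<Rightarrow> real) \<Rightarrow> box \<Rightarrow> (real \<times> real) set" where
  "Py L U g = (case g of (g0,g1,g2,g3) \<Rightarrow> Pc L U 1 3 \<union> Pint L U 1 3 g1 g3 \<union> {(g1, g3)})"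

definition Cs :: "(nat \<Rightarrow> real) \<Rightarrow> (nat \<Rightarrow> real) \<Rightarrow> box \<Rightarrow> box set" where
  "Cs L U g = {(z0,z1,z2,z3). z0 \<in> fst ` Px L U g \<and> z1 \<in> fst ` Py L U g \<and>
                              z2 \<in> snd ` Px L U g \<and> z3 \<in> snd ` Py L U g}"

end

theory Submission
  imports Defs
begin


lemma contra_pole:
  fixes p q r s M :: real
  assumes r: "r > 0" and s: "s \<le> 0"
    and H1: "\<forall>\<mu>\<in>{0..1}. ((1-\<mu>)*p+\<mu>*q)/((1-\<mu>)*r+\<mu>*s) \<le> M"
    and H2: "\<forall>\<mu>\<in>{0..1}. (1-\<mu>)*r+\<mu>*s = 0 \<longrightarrow> (1-\<mu>)*p+\<mu>*q > 0"
  shows False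
proof -
  define m1 where "m1 = r/(r-s)"
  have rs: "r - s > 0" using r s by simp
  have m1pos: "m1 > 0" "m1 \<le> 1" using r s rs unfolding m1_def by (auto simp: field_simps)
  have Dm1: "(1-m1)*r+m1*s = 0" unfolding m1_def using rs by (simp add: field_simps)
  define e0 where "e0 = p - M*r"
  define e1 where "e1 = q - M*s"
  have Eeq: "((1-x)*p+x*q) - M*((1-x)*r+x*s) = e0 + x*(e1-e0)" for x
    unfolding e0_def e1_def by (simp add: algebra_simps)
  have Em1: "e0 + m1*(e1-e0) > 0" using H2 m1pos Dm1 Eeq[of m1] by auto
  show False
  proof (cases "e0 > 0")
    case True
    then have "p / r > M" using r unfolding e0_def by (simp add: field_simps)
    moreover have "p / r \<le> M" using H1[rule_format, of 0] by simp
    ultimately show False by simp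
  next
    case False
    have d: "e1 - e0 > 0"
    proof (rule ccontr)
      assume "\<not> e1 - e0 > 0"
      then have "m1*(e1-e0) \<le> 0" using m1pos by (simp add: mult_nonneg_nonpos)
      then show False using Em1 False by linarith
    qed
    define c where "c = (e0 + m1*(e1-e0)) / (2*(e1-e0))"
    define \<mu> where "\<mu> = m1 - c"
    have cpos: "c > 0" unfolding c_def using Em1 d by simp
    have "e0 + m1*(e1-e0) \<le> m1*(e1-e0)" using False by simp
    hence "c \<le> m1*(e1-e0) / (2*(e1-e0))" unfolding c_def using d by (simp add: divide_right_mono)
    moreover have "m1*(e1-e0) / (2*(e1-e0)) = m1/2" using d by (simp add: field_simps)
    ultimately have cle: "c \<le> m1/2" by linarith
    have mu0: "\<mu> \<ge> 0" "\<mu> \<le> 1" using m1pos cle cpos unfolding \<mu>_def by auto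
    have mulm: "\<mu> < m1" unfolding \<mu>_def using cpos by simp
    have "c*(e1-e0) = (e0 + m1*(e1-e0))/2" unfolding c_def using d by (simp add: field_simps)
    hence "e0 + \<mu>*(e1-e0) = (e0 + m1*(e1-e0))/2" unfolding \<mu>_def by (simp add: algebra_simps)
    hence Emu: "((1-\<mu>)*p+\<mu>*q) - M*((1-\<mu>)*r+\<mu>*s) > 0" using Em1 Eeq[of \<mu>] by simp
    have "(1-\<mu>)*r+\<mu>*s = r - \<mu>*(r-s)" by (simp add: algebra_simps)
    moreover have "\<mu>*(r-s) < m1*(r-s)" using mulm rs by simp
    moreover have "m1*(r-s) = r" unfolding m1_def using rs by simp
    ultimately have Dpos: "(1-\<mu>)*r+\<mu>*s > 0" by simp
    have "((1-\<mu>)*p+\<mu>*q)/((1-\<mu>)*r+\<mu>*s) > M" using Emu Dpos by (simp add: field_simps)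
    with H1 mu0 show False by force
  qed
qed
lemma key1d:
  fixes p q r s M la :: real
  assumes l: "0 \<le> la" "la \<le> 1"
    and M: "M = ((1-la)*p+la*q)/((1-la)*r+la*s)"
    and H1: "\<forall>\<mu>\<in>{0..1}. ((1-\<mu>)*p+\<mu>*q)/((1-\<mu>)*r+\<mu>*s) \<le> M"
    and H2: "\<forall>\<mu>\<in>{0..1}. (1-\<mu>)*r+\<mu>*s = 0 \<longrightarrow> (1-\<mu>)*p+\<mu>*q > 0"
  shows "p/r = M \<or> q/s = M"
proof -
  have h0: "p/r \<le> M" using H1[rule_format, of 0] by simp
  have h1: "q/s \<le> M" using H1[rule_format, of 1] by simp
  have sw1: "\<forall>\<mu>\<in>{0..1}. ((1-\<mu>)*q+\<mu>*p)/((1-\<mu>)*s+\<mu>*r) \<le> M"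
  proof
    fix \<mu> :: real assume "\<mu> \<in> {0..1}"
    then have "1-\<mu> \<in> {0..1}" by auto
    from H1[rule_format, OF this] show "((1-\<mu>)*q+\<mu>*p)/((1-\<mu>)*s+\<mu>*r) \<le> M" by (simp add: algebra_simps)
  qed
  have sw2: "\<forall>\<mu>\<in>{0..1}. (1-\<mu>)*s+\<mu>*r = 0 \<longrightarrow> (1-\<mu>)*q+\<mu>*p > 0"
  proof (intro ballI impI)
    fix \<mu> :: real assume "\<mu> \<in> {0..1}" "(1-\<mu>)*s+\<mu>*r = 0"
    then have "1-\<mu> \<in> {0..1}" "(1-(1-\<mu>))*r+(1-\<mu>)*s = 0" by (auto simp: algebra_simps)
    from H2[rule_format, OF this] show "(1-\<mu>)*q+\<mu>*p > 0" by (simp add: algebra_simps)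
  qed
  show ?thesis
  proof (cases "la = 0 \<or> la = 1")
    case True then show ?thesis using M by auto
  next
    case False
    then have l2: "0 < la" "la < 1" using l by auto
    consider "r > 0 \<and> s > 0" | "r < 0 \<and> s < 0" | "r > 0 \<and> s \<le> 0" | "s > 0 \<and> r \<le> 0"
      | "r = 0 \<and> s = 0" | "r = 0 \<and> s < 0" | "r < 0 \<and> s = 0" by linarith
    then show ?thesis
    proof cases
      case 1
      have D: "(1-la)*r+la*s > 0" using 1 l2 by (simp add: add_pos_pos)
      have Ne: "(1-la)*p+la*q = (1-la)*r*(p/r) + la*s*(q/s)" using 1 by simp
      show ?thesis
      proof (rule ccontr)
        assume "\<not> ?thesis"
        then have "p/r < M" "q/s < M" using h0 h1 by auto
        then have "p < r*M" "q < s*M" using 1 using pos_divide_less_eq[of r p M] pos_divide_less_eq[of s q M] by (simp_all add: mult.commute)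
        then have "(1-la)*p < (1-la)*(r*M)" "la*q < la*(s*M)" using l2 by auto
        then have "(1-la)*p+la*q < ((1-la)*r+la*s) * M" by (simp add: algebra_simps)
        then have "M < M" using D M by (simp add: field_simps)
        then show False by simp
      qed
    next
      case 2
      have D: "(1-la)*r+la*s < 0" using 2 l2 by (simp add: add_neg_neg mult_pos_neg)
      have Ne: "(1-la)*p+la*q = (1-la)*r*(p/r) + la*s*(q/s)" using 2 by simp
      show ?thesis
      proof (rule ccontr)
        assume "\<not> ?thesis"
        then have "p/r < M" "q/s < M" using h0 h1 by auto
        then have "p > r*M" "q > s*M" using 2 neg_divide_less_eq[of r p M] neg_divide_less_eq[of s q M] by (simp_all add: mult.commute)
        then have "(1-la)*p > (1-la)*(r*M)" "la*q > la*(s*M)" using l2 by auto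
        then have "(1-la)*p+la*q > ((1-la)*r+la*s) * M" by (simp add: algebra_simps)
        then have "M < M" using D M by (simp add: field_simps)
        then show False by simp
      qed
    next
      case 3 then show ?thesis using contra_pole[OF _ _ H1 H2] by auto
    next
      case 4 then show ?thesis using contra_pole[OF _ _ sw1 sw2] by auto
    next
      case 5 then show ?thesis using M by simp
    next
      case 6
      have pp: "p > 0" using H2[rule_format, of 0] 6 by simp
      have "M = (1-la)*p/(la*s) + q/s" using M 6 l2 by (simp add: field_simps)
      moreover have "(1-la)*p/(la*s) < 0" using pp 6 l2 by (simp add: divide_pos_neg mult_pos_neg)
      ultimately have "M < q/s" by simp
      then show ?thesis using h1 by simp
    next
      case 7
      have pp: "q > 0" using H2[rule_format, of 1] 7 by simp
      have nz: "(1-la)*r \<noteq> 0" using 7 l2 by simp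
      have "M = ((1-la)*p+la*q)/((1-la)*r)" using M 7 by simp
      also have "\<dots> = (1-la)*p/((1-la)*r) + la*q/((1-la)*r)" by (simp add: add_divide_distrib)
      also have "(1-la)*p/((1-la)*r) = p/r" using l2 by simp
      finally have "M = la*q/((1-la)*r) + p/r" by simp
      moreover have "la*q/((1-la)*r) < 0" using pp 7 l2 by (simp add: divide_pos_neg mult_pos_neg)
      ultimately have "M < p/r" by simp
      then show ?thesis using h0 by simp
    qed
  qed
qed


lemma lin_max:
  fixes x y c \<mu> :: real
  assumes "0 \<le> \<mu>" "\<mu> \<le> 1" "(c \<le> x \<and> c \<le> y) \<or> (x \<le> c \<and> y \<le> c)"
  shows "max ((1-\<mu>)*x+\<mu>*y) c = (1-\<mu>)*max x c + \<mu>*max y c"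
proof -
  have e: "(1-\<mu>)*x+\<mu>*y - c = (1-\<mu>)*(x-c) + \<mu>*(y-c)" by (simp add: algebra_simps)
  from assms(3) show ?thesis
  proof
    assume h: "c \<le> x \<and> c \<le> y"
    have "(1-\<mu>)*(x-c) \<ge> 0" "\<mu>*(y-c) \<ge> 0" using h assms(1,2) by simp_all
    then have "(1-\<mu>)*x+\<mu>*y \<ge> c" using e by linarith
    then show ?thesis using h by simp
  next
    assume h: "x \<le> c \<and> y \<le> c"
    have "(1-\<mu>)*(x-c) \<le> 0" "\<mu>*(y-c) \<le> 0" using h assms(1,2) by (simp_all add: mult_nonneg_nonpos)
    then have "(1-\<mu>)*x+\<mu>*y \<le> c" using e by linarith
    then show ?thesis using h by (simp add: algebra_simps)
  qed
qed

lemma lin_min: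
  fixes x y c \<mu> :: real
  assumes "0 \<le> \<mu>" "\<mu> \<le> 1" "(c \<le> x \<and> c \<le> y) \<or> (x \<le> c \<and> y \<le> c)"
  shows "min ((1-\<mu>)*x+\<mu>*y) c = (1-\<mu>)*min x c + \<mu>*min y c"
proof -
  have e: "(1-\<mu>)*x+\<mu>*y - c = (1-\<mu>)*(x-c) + \<mu>*(y-c)" by (simp add: algebra_simps)
  from assms(3) show ?thesis
  proof
    assume h: "c \<le> x \<and> c \<le> y"
    have "(1-\<mu>)*(x-c) \<ge> 0" "\<mu>*(y-c) \<ge> 0" using h assms(1,2) by simp_all
    then have "(1-\<mu>)*x+\<mu>*y \<ge> c" using e by linarith
    then show ?thesis using h by (simp add: algebra_simps)
  next
    assume h: "x \<le> c \<and> y \<le> c"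
    have "(1-\<mu>)*(x-c) \<le> 0" "\<mu>*(y-c) \<le> 0" using h assms(1,2) by (simp_all add: mult_nonneg_nonpos)
    then have "(1-\<mu>)*x+\<mu>*y \<le> c" using e by linarith
    then show ?thesis using h by simp
  qed
qed

lemma cross:
  fixes P Q a b :: real
  assumes "a < b" "\<forall>t. a < t \<and> t < b \<longrightarrow> P + Q*t \<noteq> 0"
  shows "(0 \<le> P+Q*a \<and> 0 \<le> P+Q*b) \<or> (P+Q*a \<le> 0 \<and> P+Q*b \<le> 0)"
proof (rule ccontr)
  assume n: "\<not> ?thesis"
  then have "Q \<noteq> 0" by auto
  define z where "z = -P/Q"
  have z0: "P + Q*z = 0" unfolding z_def using \<open>Q \<noteq> 0\<close> by simp
  consider "Q > 0" | "Q < 0" using \<open>Q \<noteq> 0\<close> by linarith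
  then show False
  proof cases
    case 1
    have "Q*a \<le> Q*b" using 1 assms(1) by simp
    then have "P+Q*a < 0" "0 < P+Q*b" using n by auto
    then have "Q*a < Q*z" "Q*z < Q*b" using z0 by linarith+
    then have "a < z" "z < b" using 1 by simp_all
    then show False using assms(2) z0 by auto
  next
    case 2
    have "Q*b \<le> Q*a" using 2 assms(1) by simp
    then have "P+Q*b < 0" "0 < P+Q*a" using n by auto
    then have "Q*b < Q*z" "Q*z < Q*a" using z0 by linarith+
    then have "a < z" "z < b" using 2 by (simp_all add: mult_less_cancel_left)
    then show False using assms(2) z0 by auto
  qed
qed



lemma iou_ND:
  "iou (z0,z1,z2,z3) (g0,g1,g2,g3) =
    ((min z3 g3 - max z1 g1) * (min z2 g2 - max z0 g0)) /
    ((z3-z1)*(z2-z0) + (g3-g1)*(g2-g0) - (min z3 g3 - max z1 g1) * (min z2 g2 - max z0 g0))"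
  unfolding iou_def area_def inter_def by simp

lemma move1d:
  fixes Pa Qa Pb Qb a b tz z1 z3 g0 g1 g2 g3 :: real and L U :: "nat \<Rightarrow> real"
  assumes ab: "a \<le> tz" "tz \<le> b"
    and F: "\<forall>t\<in>{a..b}. (Pa+Qa*t, z1, Pb+Qb*t, z3) \<in> feas L U"
    and MX: "\<forall>z\<in>feas L U. iou z (g0,g1,g2,g3) \<le> iou (Pa+Qa*tz, z1, Pb+Qb*tz, z3) (g0,g1,g2,g3)"
    and g: "g0 < g2" "g1 < g3" and L: "L 2 > 0" "L 3 > 0"
  shows "\<exists>t\<in>{a..b}. (t=a \<or> t=b \<or> (Qa \<noteq> 0 \<and> Pa+Qa*t = g0) \<or> (Qb \<noteq> 0 \<and> Pb+Qb*t = g2)) \<and>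
     iou (Pa+Qa*t, z1, Pb+Qb*t, z3) (g0,g1,g2,g3) = iou (Pa+Qa*tz, z1, Pb+Qb*tz, z3) (g0,g1,g2,g3)"
proof -
  define h where "h t = iou (Pa+Qa*t, z1, Pb+Qb*t, z3) (g0,g1,g2,g3)" for t
  define cy where "cy = min z3 g3 - max z1 g1"
  define wy where "wy = z3 - z1"
  define A where "A = (g3-g1)*(g2-g0)"
  define Ix where "Ix t = min (Pb+Qb*t) g2 - max (Pa+Qa*t) g0" for t
  define wx where "wx t = (Pb+Qb*t) - (Pa+Qa*t)" for t
  define N where "N t = cy * Ix t" for t
  define D where "D t = wy * wx t + A - N t" for t
  have hND: "h t = N t / D t" for t
    unfolding h_def N_def D_def Ix_def wx_def cy_def wy_def A_def iou_ND by simp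
  have Apos: "A > 0" unfolding A_def using g by simp
  have H2: "\<forall>t\<in>{a..b}. D t = 0 \<longrightarrow> N t > 0"
  proof (intro ballI impI)
    fix t assume t: "t \<in> {a..b}" and D0: "D t = 0"
    from F t have "(Pa+Qa*t, z1, Pb+Qb*t, z3) \<in> feas L U" by blast
    then have "wx t \<ge> L 2" "wy \<ge> L 3" unfolding feas_def wx_def wy_def by auto
    then have "wx t > 0" "wy > 0" using L by linarith+
    then have "wy * wx t > 0" by simp
    then show "N t > 0" using D0 Apos unfolding D_def by linarith
  qed
  have Hmax: "\<forall>t\<in>{a..b}. h t \<le> h tz" using F MX unfolding h_def by blast
  show ?thesis
  proof (cases "(Qa \<noteq> 0 \<and> Pa+Qa*tz = g0) \<or> (Qb \<noteq> 0 \<and> Pb+Qb*tz = g2)")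
    case True then show ?thesis using ab by (intro bexI[of _ tz]) auto
  next
    case False
    define B where "B = {t. (Qa \<noteq> 0 \<and> Pa+Qa*t = g0) \<or> (Qb \<noteq> 0 \<and> Pb+Qb*t = g2)}"
    have "B \<subseteq> {(g0-Pa)/Qa, (g2-Pb)/Qb}"
    proof
      fix t assume "t \<in> B"
      then consider "Qa \<noteq> 0" "Pa+Qa*t = g0" | "Qb \<noteq> 0" "Pb+Qb*t = g2" unfolding B_def by blast
      then show "t \<in> {(g0-Pa)/Qa, (g2-Pb)/Qb}"
      proof cases
        case 1
        then have "t = (g0-Pa)/Qa" using 1 by (simp add: field_simps)
        then show ?thesis by simp
      next
        case 2
        then have "t = (g2-Pb)/Qb" using 2 by (simp add: field_simps)
        then show ?thesis by simp
      qed
    qed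
    then have finB: "finite B" by (rule finite_subset) simp
    define S where "S = {a,b} \<union> (B \<inter> {a..b})"
    have finS: "finite S" unfolding S_def using finB by simp
    define Sa where "Sa = {t\<in>S. t \<le> tz}"
    define Sb where "Sb = {t\<in>S. tz \<le> t}"
    have aSa: "a \<in> Sa" unfolding Sa_def S_def using ab by simp
    have bSb: "b \<in> Sb" unfolding Sb_def S_def using ab by simp
    have finSa: "finite Sa" "finite Sb" unfolding Sa_def Sb_def using finS by simp_all
    define a' where "a' = Max Sa"
    define b' where "b' = Min Sb"
    have a'in: "a' \<in> Sa" unfolding a'_def using finSa aSa by (intro Max_in) auto
    have b'in: "b' \<in> Sb" unfolding b'_def using finSa bSb by (intro Min_in) auto
    have aa': "a \<le> a'" unfolding a'_def using finSa aSa by (intro Max_ge) auto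
    have bb': "b' \<le> b" unfolding b'_def using finSa bSb by (intro Min_le) auto
    have a'tz: "a' \<le> tz" "a' \<in> S" using a'in unfolding Sa_def by auto
    have b'tz: "tz \<le> b'" "b' \<in> S" using b'in unfolding Sb_def by auto
    have noB: "\<forall>t. a' < t \<and> t < b' \<longrightarrow> t \<notin> B"
    proof (intro allI impI)
      fix t assume t: "a' < t \<and> t < b'"
      show "t \<notin> B"
      proof
        assume "t \<in> B"
        then have tS: "t \<in> S" unfolding S_def using t aa' bb' by auto
        show False
        proof (cases "t \<le> tz")
          case True
          then have "t \<in> Sa" unfolding Sa_def using tS by simp
          then have "t \<le> a'" unfolding a'_def using finSa by (intro Max_ge) auto
          then show False using t by simp
        next
          case False
          then have "t \<in> Sb" unfolding Sb_def using tS by simp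
          then have "b' \<le> t" unfolding b'_def using finSa by (intro Min_le) auto
          then show False using t by simp
        qed
      qed
    qed
    have main: "h a' = h tz \<or> h b' = h tz"
    proof (cases "a' = b'")
      case True then show ?thesis using a'tz b'tz by simp
    next
      case False
      then have lt: "a' < b'" using a'tz b'tz by simp
      have s0: "(g0 \<le> Pa+Qa*a' \<and> g0 \<le> Pa+Qa*b') \<or> (Pa+Qa*a' \<le> g0 \<and> Pa+Qa*b' \<le> g0)"
      proof (cases "Qa = 0")
        case True then show ?thesis by auto
      next
        case False
        have "\<forall>t. a' < t \<and> t < b' \<longrightarrow> (Pa-g0) + Qa*t \<noteq> 0" using noB False unfolding B_def by auto
        from cross[OF lt this] show ?thesis by auto
      qed
      have s2: "(g2 \<le> Pb+Qb*a' \<and> g2 \<le> Pb+Qb*b') \<or> (Pb+Qb*a' \<le> g2 \<and> Pb+Qb*b' \<le> g2)"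
      proof (cases "Qb = 0")
        case True then show ?thesis by auto
      next
        case False
        have "\<forall>t. a' < t \<and> t < b' \<longrightarrow> (Pb-g2) + Qb*t \<noteq> 0" using noB False unfolding B_def by auto
        from cross[OF lt this] show ?thesis by auto
      qed
      define T where "T \<mu> = (1-\<mu>)*a' + \<mu>*b'" for \<mu>
      have Tin: "T \<mu> \<in> {a..b}" if "\<mu> \<in> {0..1}" for \<mu>
      proof -
        have "(1-\<mu>)*a' + \<mu>*b' \<ge> (1-\<mu>)*a' + \<mu>*a'" using that lt by (simp add: mult_left_mono)
        moreover have "(1-\<mu>)*a' + \<mu>*b' \<le> (1-\<mu>)*b' + \<mu>*b'" using that lt by (simp add: mult_left_mono)
        ultimately show ?thesis unfolding T_def using aa' bb' by (auto simp: algebra_simps)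
      qed
      have lin: "N (T \<mu>) = (1-\<mu>)*N a' + \<mu>*N b' \<and> D (T \<mu>) = (1-\<mu>)*D a' + \<mu>*D b'"
        if mu: "\<mu> \<in> {0..1}" for \<mu>
      proof -
        have e0: "Pa+Qa*T \<mu> = (1-\<mu>)*(Pa+Qa*a') + \<mu>*(Pa+Qa*b')" unfolding T_def by (simp add: algebra_simps)
        have e2: "Pb+Qb*T \<mu> = (1-\<mu>)*(Pb+Qb*a') + \<mu>*(Pb+Qb*b')" unfolding T_def by (simp add: algebra_simps)
        have m0: "max (Pa+Qa*T \<mu>) g0 = (1-\<mu>)*max (Pa+Qa*a') g0 + \<mu>*max (Pa+Qa*b') g0"
          unfolding e0 using mu s0 by (intro lin_max) auto
        have m2: "min (Pb+Qb*T \<mu>) g2 = (1-\<mu>)*min (Pb+Qb*a') g2 + \<mu>*min (Pb+Qb*b') g2"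
          unfolding e2 using mu s2 by (intro lin_min) auto
        have I: "Ix (T \<mu>) = (1-\<mu>)*Ix a' + \<mu>*Ix b'" unfolding Ix_def m0 m2 by (simp add: algebra_simps)
        have W: "wx (T \<mu>) = (1-\<mu>)*wx a' + \<mu>*wx b'" unfolding wx_def e0 e2 by (simp add: algebra_simps)
        have NN: "N (T \<mu>) = (1-\<mu>)*N a' + \<mu>*N b'" unfolding N_def I by (simp add: algebra_simps)
        have "D (T \<mu>) = (1-\<mu>)*D a' + \<mu>*D b'" unfolding D_def NN W by (simp add: algebra_simps)
        with NN show ?thesis by simp
      qed
      define la where "la = (tz-a')/(b'-a')"
      have la01: "la \<in> {0..1}" unfolding la_def using lt a'tz b'tz by (auto simp: field_simps)
      have "la*(b'-a') = tz-a'" unfolding la_def using lt by simp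
      moreover have "T la = a' + la*(b'-a')" unfolding T_def by (simp add: algebra_simps)
      ultimately have Tla: "T la = tz" by simp
      have K: "N a' / D a' = h tz \<or> N b' / D b' = h tz"
      proof (rule key1d)
        show "0 \<le> la" "la \<le> 1" using la01 by auto
        show "h tz = ((1-la)*N a'+la*N b')/((1-la)*D a'+la*D b')"
          using lin[OF la01] Tla hND[of tz] by simp
        show "\<forall>\<mu>\<in>{0..1}. ((1-\<mu>)*N a'+\<mu>*N b')/((1-\<mu>)*D a'+\<mu>*D b') \<le> h tz"
        proof
          fix \<mu> :: real assume mu: "\<mu> \<in> {0..1}"
          have "((1-\<mu>)*N a'+\<mu>*N b')/((1-\<mu>)*D a'+\<mu>*D b') = h (T \<mu>)" using lin[OF mu] hND by simp
          also have "\<dots> \<le> h tz" using Hmax Tin[OF mu] by blast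
          finally show "((1-\<mu>)*N a'+\<mu>*N b')/((1-\<mu>)*D a'+\<mu>*D b') \<le> h tz" .
        qed
        show "\<forall>\<mu>\<in>{0..1}. (1-\<mu>)*D a'+\<mu>*D b' = 0 \<longrightarrow> (1-\<mu>)*N a'+\<mu>*N b' > 0"
          using lin H2 Tin by metis
      qed
      then show ?thesis using hND by simp
    qed
    have a'ab: "a' \<in> {a..b}" "b' \<in> {a..b}" using aa' bb' a'tz b'tz ab by auto
    have a'c: "a' = a \<or> a' = b \<or> a' \<in> B" using a'tz(2) unfolding S_def by auto
    have b'c: "b' = a \<or> b' = b \<or> b' \<in> B" using b'tz(2) unfolding S_def by auto
    from main show ?thesis
    proof
      assume "h a' = h tz"
      then show ?thesis using a'ab a'c unfolding h_def B_def by blast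
    next
      assume "h b' = h tz"
      then show ?thesis using a'ab b'c unfolding h_def B_def by blast
    qed
  qed
qed



lemma xstep:
  fixes z0 z1 z2 z3 g0 g1 g2 g3 :: real and L U :: "nat \<Rightarrow> real"
  assumes g: "g0 < g2" "g1 < g3" and L: "L 2 > 0" "L 3 > 0"
    and zf: "(z0,z1,z2,z3) \<in> feas L U"
    and MX: "\<forall>z\<in>feas L U. iou z (g0,g1,g2,g3) \<le> iou (z0,z1,z2,z3) (g0,g1,g2,g3)"
  shows "\<exists>x0 x2. (x0,x2) \<in> Px L U (g0,g1,g2,g3) \<and> (x0,z1,x2,z3) \<in> feas L U \<and>
           iou (x0,z1,x2,z3) (g0,g1,g2,g3) = iou (z0,z1,z2,z3) (g0,g1,g2,g3)"
proof -
  define M where "M = iou (z0,z1,z2,z3) (g0,g1,g2,g3)"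
  define w where "w = z2 - z0"
  define s where "s = z0 + z2"
  have zfe: "L 0 \<le> s" "s \<le> U 0" "L 2 \<le> w" "w \<le> U 2" "L 1 \<le> z1+z3" "z1+z3 \<le> U 1"
    "L 3 \<le> z3-z1" "z3-z1 \<le> U 3" using zf unfolding feas_def s_def w_def by auto
  have F1: "\<forall>t\<in>{L 0..U 0}. (-w/2 + (1/2)*t, z1, w/2 + (1/2)*t, z3) \<in> feas L U"
    using zfe unfolding feas_def by auto
  have e1: "-w/2 + (1/2)*s = z0" "w/2 + (1/2)*s = z2" unfolding w_def s_def by (simp_all add: field_simps)
  have MX1: "\<forall>z\<in>feas L U. iou z (g0,g1,g2,g3) \<le> iou (-w/2 + (1/2)*s, z1, w/2 + (1/2)*s, z3) (g0,g1,g2,g3)"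
    using MX unfolding e1 .
  obtain t1 where t1: "t1 \<in> {L 0..U 0}"
    and c1: "t1 = L 0 \<or> t1 = U 0 \<or> ((1/2::real) \<noteq> 0 \<and> -w/2 + (1/2)*t1 = g0) \<or> ((1/2::real) \<noteq> 0 \<and> w/2 + (1/2)*t1 = g2)"
    and q1: "iou (-w/2 + (1/2)*t1, z1, w/2 + (1/2)*t1, z3) (g0,g1,g2,g3) = iou (-w/2 + (1/2)*s, z1, w/2 + (1/2)*s, z3) (g0,g1,g2,g3)"
    using move1d[where a="L 0" and tz="s" and b="U 0" and Pa="-w/2" and Qa="1/2" and Pb="w/2" and Qb="1/2", OF zfe(1,2) F1 MX1 g L] by blast
  define y0 where "y0 = -w/2 + (1/2)*t1"
  define y2 where "y2 = w/2 + (1/2)*t1"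
  have yf: "(y0,z1,y2,z3) \<in> feas L U" using F1 t1 unfolding y0_def y2_def by blast
  have qy: "iou (y0,z1,y2,z3) (g0,g1,g2,g3) = M" using q1 unfolding y0_def y2_def M_def e1 .
  have MXy: "\<forall>z\<in>feas L U. iou z (g0,g1,g2,g3) \<le> iou (y0,z1,y2,z3) (g0,g1,g2,g3)" using MX qy unfolding M_def by simp
  have yfe: "L 0 \<le> y0+y2" "y0+y2 \<le> U 0" "L 2 \<le> y2-y0" "y2-y0 \<le> U 2"
    using yf unfolding feas_def by auto
  have ys: "y0 + y2 = t1" "y2 - y0 = w" unfolding y0_def y2_def by (simp_all add: field_simps)
  consider "t1 = L 0 \<or> t1 = U 0" | "y0 = g0" | "y2 = g2" using c1 unfolding y0_def y2_def by auto
  then show ?thesis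
  proof cases
    case 1
    have F2: "\<forall>t\<in>{L 2..U 2}. (t1/2 + (-1/2)*t, z1, t1/2 + (1/2)*t, z3) \<in> feas L U"
      using zfe t1 unfolding feas_def by auto
    have e2: "t1/2 + (-1/2)*w = y0" "t1/2 + (1/2)*w = y2" unfolding y0_def y2_def by (simp_all add: field_simps)
    have MX2: "\<forall>z\<in>feas L U. iou z (g0,g1,g2,g3) \<le> iou (t1/2 + (-1/2)*w, z1, t1/2 + (1/2)*w, z3) (g0,g1,g2,g3)"
      using MXy unfolding e2 .
    obtain t2 where t2: "t2 \<in> {L 2..U 2}"
      and c2: "t2 = L 2 \<or> t2 = U 2 \<or> ((-1/2::real) \<noteq> 0 \<and> t1/2 + (-1/2)*t2 = g0) \<or> ((1/2::real) \<noteq> 0 \<and> t1/2 + (1/2)*t2 = g2)"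
      and q2: "iou (t1/2 + (-1/2)*t2, z1, t1/2 + (1/2)*t2, z3) (g0,g1,g2,g3) = iou (t1/2 + (-1/2)*w, z1, t1/2 + (1/2)*w, z3) (g0,g1,g2,g3)"
      using move1d[where a="L 2" and tz="w" and b="U 2" and Pa="t1/2" and Qa="-1/2" and Pb="t1/2" and Qb="1/2", OF zfe(3,4) F2 MX2 g L] by blast
    define x0 where "x0 = t1/2 + (-1/2)*t2"
    define x2 where "x2 = t1/2 + (1/2)*t2"
    have xf: "(x0,z1,x2,z3) \<in> feas L U" using F2 t2 unfolding x0_def x2_def by blast
    have qx: "iou (x0,z1,x2,z3) (g0,g1,g2,g3) = M" using q2 qy unfolding x0_def x2_def e2 by simp
    have xs: "x0 = (t1 - t2)/2" "x2 = (t1+t2)/2" unfolding x0_def x2_def by (simp_all add: field_simps)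
    have "(x0,x2) \<in> Px L U (g0,g1,g2,g3)"
    proof -
      consider "t2 = L 2 \<or> t2 = U 2" | "x0 = g0" | "x2 = g2" using c2 unfolding x0_def x2_def by auto
      then show ?thesis
      proof cases
        case 1 then show ?thesis using \<open>t1 = L 0 \<or> t1 = U 0\<close> unfolding xs Px_def Pc_def by auto
      next
        case 2
        have "x2 = t1 - g0" using 2 xs by simp
        then show ?thesis using 2 \<open>t1 = L 0 \<or> t1 = U 0\<close> unfolding Px_def Pint_def by auto
      next
        case 3
        have "x0 = t1 - g2" using 3 xs by simp
        then show ?thesis using 3 \<open>t1 = L 0 \<or> t1 = U 0\<close> unfolding Px_def Pint_def by auto
      qed
    qed
    then show ?thesis using xf qx unfolding M_def by blast
  next
    case 2
    define lo where "lo = max (L 0 - g0) (L 2 + g0)"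
    define hi where "hi = min (U 0 - g0) (U 2 + g0)"
    have F2: "\<forall>t\<in>{lo..hi}. (g0 + 0*t, z1, 0 + 1*t, z3) \<in> feas L U"
      using zfe unfolding feas_def lo_def hi_def by auto
    have MX2: "\<forall>z\<in>feas L U. iou z (g0,g1,g2,g3) \<le> iou (g0 + 0*y2, z1, 0 + 1*y2, z3) (g0,g1,g2,g3)"
      using MXy 2 by simp
    have y2in: "lo \<le> y2" "y2 \<le> hi" using yfe 2 unfolding lo_def hi_def by auto
    obtain t2 where t2: "t2 \<in> {lo..hi}"
      and c2: "t2 = lo \<or> t2 = hi \<or> ((0::real) \<noteq> 0 \<and> g0 + 0*t2 = g0) \<or> ((1::real) \<noteq> 0 \<and> 0 + 1*t2 = g2)"
      and q2: "iou (g0 + 0*t2, z1, 0 + 1*t2, z3) (g0,g1,g2,g3) = iou (g0 + 0*y2, z1, 0 + 1*y2, z3) (g0,g1,g2,g3)"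
      using move1d[where a="lo" and tz="y2" and b="hi" and Pa="g0" and Qa="0" and Pb="0" and Qb="1", OF y2in F2 MX2 g L] by blast
    have xf: "(g0,z1,t2,z3) \<in> feas L U" using F2 t2 by auto
    have qx: "iou (g0,z1,t2,z3) (g0,g1,g2,g3) = M" using q2 qy 2 by simp
    have "(g0,t2) \<in> Px L U (g0,g1,g2,g3)"
    proof -
      consider "t2 = L 0 - g0" | "t2 = L 2 + g0" | "t2 = U 0 - g0" | "t2 = U 2 + g0" | "t2 = g2"
        using c2 unfolding lo_def hi_def max_def min_def by (auto split: if_splits)
      then show ?thesis unfolding Px_def Pint_def by cases auto
    qed
    then show ?thesis using xf qx unfolding M_def by blast
  next
    case 3
    define lo where "lo = max (L 0 - g2) (g2 - U 2)"
    define hi where "hi = min (U 0 - g2) (g2 - L 2)"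
    have F2: "\<forall>t\<in>{lo..hi}. (0 + 1*t, z1, g2 + 0*t, z3) \<in> feas L U"
      using zfe unfolding feas_def lo_def hi_def by auto
    have MX2: "\<forall>z\<in>feas L U. iou z (g0,g1,g2,g3) \<le> iou (0 + 1*y0, z1, g2 + 0*y0, z3) (g0,g1,g2,g3)"
      using MXy 3 by simp
    have y0in: "lo \<le> y0" "y0 \<le> hi" using yfe 3 unfolding lo_def hi_def by auto
    obtain t2 where t2: "t2 \<in> {lo..hi}"
      and c2: "t2 = lo \<or> t2 = hi \<or> ((1::real) \<noteq> 0 \<and> 0 + 1*t2 = g0) \<or> ((0::real) \<noteq> 0 \<and> g2 + 0*t2 = g2)"
      and q2: "iou (0 + 1*t2, z1, g2 + 0*t2, z3) (g0,g1,g2,g3) = iou (0 + 1*y0, z1, g2 + 0*y0, z3) (g0,g1,g2,g3)"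
      using move1d[where a="lo" and tz="y0" and b="hi" and Pa="0" and Qa="1" and Pb="g2" and Qb="0", OF y0in F2 MX2 g L] by blast
    have xf: "(t2,z1,g2,z3) \<in> feas L U" using F2 t2 by auto
    have qx: "iou (t2,z1,g2,z3) (g0,g1,g2,g3) = M" using q2 qy 3 by simp
    have "(t2,g2) \<in> Px L U (g0,g1,g2,g3)"
    proof -
      consider "t2 = L 0 - g2" | "t2 = g2 - U 2" | "t2 = U 0 - g2" | "t2 = g2 - L 2" | "t2 = g0"
        using c2 unfolding lo_def hi_def max_def min_def by (auto split: if_splits)
      then show ?thesis unfolding Px_def Pint_def by cases auto
    qed
    then show ?thesis using xf qx unfolding M_def by blast
  qed
qed



definition perm4 :: "nat \<Rightarrow> nat" where
  "perm4 i = (if i = 0 then 1 else if i = 1 then 0 else if i = 2 then 3 else if i = 3 then 2 else i)"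

lemma feas_swap:
  "((a,b,c,d) \<in> feas (L \<circ> perm4) (U \<circ> perm4)) = ((b,a,d,c) \<in> feas L U)"
  unfolding feas_def perm4_def by auto

lemma iou_swap: "iou (a,b,c,d) (g0,g1,g2,g3) = iou (b,a,d,c) (g1,g0,g3,g2)"
  unfolding iou_ND by (simp add: mult.commute)

lemma Px_swap: "Px (L \<circ> perm4) (U \<circ> perm4) (g1,g0,g3,g2) = Py L U (g0,g1,g2,g3)"
  unfolding Px_def Py_def Pc_def Pint_def perm4_def by simp

lemma ystep:
  fixes x0 z1 x2 z3 g0 g1 g2 g3 :: real and L U :: "nat \<Rightarrow> real"
  assumes g: "g0 < g2" "g1 < g3" and L: "L 2 > 0" "L 3 > 0"
    and zf: "(x0,z1,x2,z3) \<in> feas L U"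
    and MX: "\<forall>z\<in>feas L U. iou z (g0,g1,g2,g3) \<le> iou (x0,z1,x2,z3) (g0,g1,g2,g3)"
  shows "\<exists>y1 y3. (y1,y3) \<in> Py L U (g0,g1,g2,g3) \<and> (x0,y1,x2,y3) \<in> feas L U \<and>
           iou (x0,y1,x2,y3) (g0,g1,g2,g3) = iou (x0,z1,x2,z3) (g0,g1,g2,g3)"
proof -
  have L': "(L \<circ> perm4) 2 > 0" "(L \<circ> perm4) 3 > 0" using L by (simp_all add: perm4_def)
  have zf': "(z1,x0,z3,x2) \<in> feas (L \<circ> perm4) (U \<circ> perm4)" using zf feas_swap by blast
  have MX': "\<forall>z\<in>feas (L \<circ> perm4) (U \<circ> perm4). iou z (g1,g0,g3,g2) \<le> iou (z1,x0,z3,x2) (g1,g0,g3,g2)"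
  proof
    fix z assume zin: "z \<in> feas (L \<circ> perm4) (U \<circ> perm4)"
    obtain a b c d where zz: "z = (a,b,c,d)" by (cases z) auto
    have "(b,a,d,c) \<in> feas L U" using zin zz feas_swap by blast
    then have "iou (b,a,d,c) (g0,g1,g2,g3) \<le> iou (x0,z1,x2,z3) (g0,g1,g2,g3)" using MX by blast
    then show "iou z (g1,g0,g3,g2) \<le> iou (z1,x0,z3,x2) (g1,g0,g3,g2)"
      unfolding zz using iou_swap by metis
  qed
  from xstep[OF g(2) g(1) L' zf' MX'] obtain y1 y3 where
    y: "(y1,y3) \<in> Px (L \<circ> perm4) (U \<circ> perm4) (g1,g0,g3,g2)"
       "(y1,x0,y3,x2) \<in> feas (L \<circ> perm4) (U \<circ> perm4)"
       "iou (y1,x0,y3,x2) (g1,g0,g3,g2) = iou (z1,x0,z3,x2) (g1,g0,g3,g2)" by blast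
  have "(y1,y3) \<in> Py L U (g0,g1,g2,g3)" using y(1) Px_swap by metis
  moreover have "(x0,y1,x2,y3) \<in> feas L U" using y(2) feas_swap by blast
  moreover have "iou (x0,y1,x2,y3) (g0,g1,g2,g3) = iou (x0,z1,x2,z3) (g0,g1,g2,g3)"
    using y(3) iou_swap by metis
  ultimately show ?thesis by blast
qed

theorem theorem2:
  fixes g0 g1 g2 g3 :: real and L U :: "nat \<Rightarrow> real" and zs :: box
  assumes "g0 < g2" and "g1 < g3"
    and "\<forall>i<4. L i \<le> U i" and "L 2 > 0" and "L 3 > 0"
    and "zs \<in> feas L U"
    and "\<forall>z\<in>feas L U. iou z (g0,g1,g2,g3) \<le> iou zs (g0,g1,g2,g3)"
  shows "\<exists>z'\<in>Cs L U (g0,g1,g2,g3) \<inter> feas L U. iou z' (g0,g1,g2,g3) = iou zs (g0,g1,g2,g3)"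
proof -
  obtain z0 z1 z2 z3 where zs: "zs = (z0,z1,z2,z3)" by (cases zs) auto
  have zf: "(z0,z1,z2,z3) \<in> feas L U" using assms(6) zs by simp
  have MX0: "\<forall>z\<in>feas L U. iou z (g0,g1,g2,g3) \<le> iou (z0,z1,z2,z3) (g0,g1,g2,g3)" using assms(7) zs by simp
  from xstep[OF assms(1,2,4,5) zf MX0] obtain x0 x2 where
    x: "(x0,x2) \<in> Px L U (g0,g1,g2,g3)" "(x0,z1,x2,z3) \<in> feas L U"
       "iou (x0,z1,x2,z3) (g0,g1,g2,g3) = iou zs (g0,g1,g2,g3)" using zs by auto
  have MX2: "\<forall>z\<in>feas L U. iou z (g0,g1,g2,g3) \<le> iou (x0,z1,x2,z3) (g0,g1,g2,g3)"
    using assms(7) x(3) by simp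
  from ystep[OF assms(1,2,4,5) x(2) MX2] obtain y1 y3 where
    y: "(y1,y3) \<in> Py L U (g0,g1,g2,g3)" "(x0,y1,x2,y3) \<in> feas L U"
       "iou (x0,y1,x2,y3) (g0,g1,g2,g3) = iou (x0,z1,x2,z3) (g0,g1,g2,g3)" by blast
  have "(x0,y1,x2,y3) \<in> Cs L U (g0,g1,g2,g3)"
    unfolding Cs_def using x(1) y(1) by (force intro: rev_image_eqI)
  then show ?thesis using y x(3) by (intro bexI[of _ "(x0,y1,x2,y3)"]) auto
qed


end
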